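(* Let $A$ be a sub-tree of $T$, let $I',I''\subseteq\mathcal{I}_A$ be disjoint, and let $\Psi\subseteq V_A^{I'}$ and $\Phi\subseteq V_A^{I''}$. Then for every $x\in[0,d(r_A)]$, $$G(\Psi\cup\Phi,x)=G(\Psi,x)+G\big(\Phi,\;x+(d(r_A)-x)P(\Psi)\big),$$ where $P(\Psi)=0$ if $\Psi=\emptyset$ (note $x+(d(r_A)-x)P(\Psi)\le d(r_A)$).
   Context: Setting. $T$ is a finite tree rooted at $r_T$, node set $V_T$; every edge $e$ has weight $w_e\ge 0$. Every node $v$ has a probability $\pi_v\in(0,1]$ and a prize $p_v\in\mathbb{R}$. $d(v)$ is the total weight of the path from $r_T$ to $v$. A random set $\omega\subseteq V_T$ contains each node $v$ independently with probability $\pi_v$. For $S\subseteq V_T$, $P(S)=1-\prod_{s\in S}(1-\pi_s)$ ($P(\emptyset)=0$). For a node $a$, the sub-tree $A$ rooted at $r_A=a$ consists of $a$ and all its descendants, with node set $V_A$; if $a$ has children $c_1,\dots,c_m$, then $A_i$ ($1\le i\le m$) is the sub-tree rooted at $c_i$, $A_0$ is the sub-tree consisting of the single node $r_A$, $\mathcal{I}_A=\{0,1,\dots,m\}$, and $V_A^I=\bigcup_{i\in I}V_{A_i}$ for $I\subseteq\mathcal{I}_A$. For $Q\subseteq V_T$, $W(Q)$ is the total weight of the edges lying on at least one path from $r_T$ to a node of $Q$. For $S\subseteq V_A$ and $x\le d(r_A)$ the expected profit is $G(S,x)=\sum_{s\in S}p_s\pi_s-\mathbb{E}[W(S\cap\omega)]+x\,P(S)$.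 *)

theory Defs
  imports Complex_Main
begin

text \<open>The edge (v, par v) for v \<noteq> r is identified with its lower
  endpoint v and has weight w v.\<close>

definition is_tree :: "'a set \<Rightarrow> 'a \<Rightarrow> ('a \<Rightarrow> 'a) \<Rightarrow> bool" where
  "is_tree V r par \<longleftrightarrow> finite V \<and> r \<in> V \<and> (\<forall>v\<in>V - {r}. par v \<in> V)
      \<and> (\<forall>v\<in>V. \<exists>n. (par ^^ n) v = r)"

definition path_nodes :: "'a \<Rightarrow> ('a \<Rightarrow> 'a) \<Rightarrow> 'a \<Rightarrow> 'a set" where
  "path_nodes r par v = {(par ^^ k) v | k. k \<le> (LEAST n. (par ^^ n) v = r)}"

definition path_edges :: "'a \<Rightarrow> ('a \<Rightarrow> 'a) \<Rightarrow> 'a \<Rightarrow> 'a set" where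
  "path_edges r par v = path_nodes r par v - {r}"

definition depth :: "'a \<Rightarrow> ('a \<Rightarrow> 'a) \<Rightarrow> ('a \<Rightarrow> real) \<Rightarrow> 'a \<Rightarrow> real" where
  "depth r par w v = (\<Sum>e\<in>path_edges r par v. w e)"

definition Wt :: "'a \<Rightarrow> ('a \<Rightarrow> 'a) \<Rightarrow> ('a \<Rightarrow> real) \<Rightarrow> 'a set \<Rightarrow> real" where
  "Wt r par w Q = (\<Sum>e\<in>(\<Union>v\<in>Q. path_edges r par v). w e)"

definition subtree :: "'a set \<Rightarrow> 'a \<Rightarrow> ('a \<Rightarrow> 'a) \<Rightarrow> 'a \<Rightarrow> 'a set" where
  "subtree V r par a = {u \<in> V. a \<in> path_nodes r par u}"

definition children :: "'a set \<Rightarrow> 'a \<Rightarrow> ('a \<Rightarrow> 'a) \<Rightarrow> 'a \<Rightarrow> 'a set" where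
  "children V r par a = {c \<in> V. c \<noteq> r \<and> par c = a}"

text \<open>Index set I_A: None plays the role of index 0 (the single-node sub-tree A_0),
  Some c for a child c of a (the sub-tree rooted at c).\<close>
definition index_set :: "'a set \<Rightarrow> 'a \<Rightarrow> ('a \<Rightarrow> 'a) \<Rightarrow> 'a \<Rightarrow> 'a option set" where
  "index_set V r par a = insert None (Some ` children V r par a)"

definition part :: "'a set \<Rightarrow> 'a \<Rightarrow> ('a \<Rightarrow> 'a) \<Rightarrow> 'a \<Rightarrow> 'a option \<Rightarrow> 'a set" where
  "part V r par a i = (case i of None \<Rightarrow> {a} | Some c \<Rightarrow> subtree V r par c)"

definition parts :: "'a set \<Rightarrow> 'a \<Rightarrow> ('a \<Rightarrow> 'a) \<Rightarrow> 'a \<Rightarrow> 'a option set \<Rightarrow> 'a set" where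
  "parts V r par a I = (\<Union>i\<in>I. part V r par a i)"

definition Pr :: "('a \<Rightarrow> real) \<Rightarrow> 'a set \<Rightarrow> real" where
  "Pr \<pi> S = 1 - (\<Prod>s\<in>S. 1 - \<pi> s)"

text \<open>Probability that the random set omega (each node v of V independently
  with probability pi v) equals U.\<close>
definition omega_prob :: "'a set \<Rightarrow> ('a \<Rightarrow> real) \<Rightarrow> 'a set \<Rightarrow> real" where
  "omega_prob V \<pi> U = (\<Prod>u\<in>U. \<pi> u) * (\<Prod>u\<in>V - U. 1 - \<pi> u)"

definition EW :: "'a set \<Rightarrow> 'a \<Rightarrow> ('a \<Rightarrow> 'a) \<Rightarrow> ('a \<Rightarrow> real) \<Rightarrow> ('a \<Rightarrow> real) \<Rightarrow> 'a set \<Rightarrow> real" where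
  "EW V r par w \<pi> S = (\<Sum>U\<in>Pow V. omega_prob V \<pi> U * Wt r par w (S \<inter> U))"

definition G :: "'a set \<Rightarrow> 'a \<Rightarrow> ('a \<Rightarrow> 'a) \<Rightarrow> ('a \<Rightarrow> real) \<Rightarrow> ('a \<Rightarrow> real) \<Rightarrow> ('a \<Rightarrow> real)
    \<Rightarrow> 'a set \<Rightarrow> real \<Rightarrow> real" where
  "G V r par w \<pi> p S x = (\<Sum>s\<in>S. p s * \<pi> s) - EW V r par w \<pi> S + x * Pr \<pi> S"

end

theory Submission
  imports Defs
begin

definition lev :: "'a \<Rightarrow> ('a \<Rightarrow> 'a) \<Rightarrow> 'a \<Rightarrow> nat" where
  "lev r par v = (LEAST n. (par ^^ n) v = r)"

lemma fp_comp: "(f ^^ m) ((f ^^ k) v) = (f ^^ (m + k)) v"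
  by (simp add: funpow_add)

lemma pn_lev: "path_nodes r par v = {(par ^^ k) v | k. k \<le> lev r par v}"
  by (simp add: path_nodes_def lev_def)

lemma lev_hit:
  assumes "is_tree V r par" "v \<in> V"
  shows "(par ^^ lev r par v) v = r" "\<And>n. n < lev r par v \<Longrightarrow> (par ^^ n) v \<noteq> r"
proof -
  obtain n where "(par ^^ n) v = r" using assms unfolding is_tree_def by blast
  then show "(par ^^ lev r par v) v = r" unfolding lev_def by (rule LeastI)
  show "\<And>n. n < lev r par v \<Longrightarrow> (par ^^ n) v \<noteq> r" unfolding lev_def
    using not_less_Least by blast
qed

lemma iter_in:
  assumes "is_tree V r par" "v \<in> V"
  shows "k \<le> lev r par v \<Longrightarrow> (par ^^ k) v \<in> V"
proof (induction k)
  case 0 then show ?case using assms by simp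
next
  case (Suc k)
  then have "(par ^^ k) v \<in> V" by simp
  moreover have "(par ^^ k) v \<noteq> r" using lev_hit(2)[OF assms] Suc by simp
  ultimately show ?case using assms(1) unfolding is_tree_def by simp
qed

lemma lev_iter:
  assumes "is_tree V r par" "v \<in> V" "k \<le> lev r par v"
  shows "lev r par ((par ^^ k) v) = lev r par v - k"
  unfolding lev_def[of r par "(par ^^ k) v"]
proof (rule Least_equality)
  show "(par ^^ (lev r par v - k)) ((par ^^ k) v) = r"
    using lev_hit(1)[OF assms(1,2)] assms(3) by (simp add: fp_comp)
  show "\<And>y. (par ^^ y) ((par ^^ k) v) = r \<Longrightarrow> lev r par v - k \<le> y"
  proof (rule ccontr)
    fix y assume h: "(par ^^ y) ((par ^^ k) v) = r" "\<not> lev r par v - k \<le> y"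
    then have "(par ^^ (y + k)) v = r" by (simp add: funpow_add)
    moreover have "y + k < lev r par v" using h(2) by simp
    ultimately show False using lev_hit(2)[OF assms(1,2)] by blast
  qed
qed

lemma pn_self: "v \<in> path_nodes r par v"
  unfolding pn_lev by (rule CollectI, rule exI[of _ 0]) simp

lemma pn_lev_le:
  assumes "is_tree V r par" "v \<in> V" "z \<in> path_nodes r par v"
  shows "lev r par z \<le> lev r par v"
  using assms lev_iter[OF assms(1,2)] unfolding pn_lev by auto

lemma pn_in:
  assumes "is_tree V r par" "v \<in> V" "z \<in> path_nodes r par v"
  shows "z \<in> V"
  using assms iter_in unfolding pn_lev by auto

lemma pn_sub:
  assumes "is_tree V r par" "v \<in> V" "z \<in> path_nodes r par v"
  shows "path_nodes r par z \<subseteq> path_nodes r par v"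
proof
  fix y assume y: "y \<in> path_nodes r par z"
  obtain k where k: "z = (par ^^ k) v" "k \<le> lev r par v" using assms(3) unfolding pn_lev by auto
  have lz: "lev r par z = lev r par v - k" using lev_iter[OF assms(1,2) k(2)] k(1) by simp
  obtain j where j: "y = (par ^^ j) z" "j \<le> lev r par z" using y unfolding pn_lev by auto
  have "y = (par ^^ (j + k)) v" using j k by (simp add: funpow_add)
  moreover have "j + k \<le> lev r par v" using j lz k by simp
  ultimately show "y \<in> path_nodes r par v" unfolding pn_lev by blast
qed

lemma pn_unique:
  assumes "is_tree V r par" "v \<in> V" "y \<in> path_nodes r par v" "y' \<in> path_nodes r par v"
    "lev r par y = lev r par y'"
  shows "y = y'"
proof -
  obtain i where i: "y = (par ^^ i) v" "i \<le> lev r par v" using assms(3) unfolding pn_lev by auto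
  obtain j where j: "y' = (par ^^ j) v" "j \<le> lev r par v" using assms(4) unfolding pn_lev by auto
  have "lev r par v - i = lev r par v - j"
    using assms(5) lev_iter[OF assms(1,2) i(2)] lev_iter[OF assms(1,2) j(2)] i j by simp
  then have "i = j" using i j by simp
  then show ?thesis using i j by simp
qed

lemma pn_low:
  assumes "is_tree V r par" "v \<in> V" "y \<in> path_nodes r par v" "z \<in> path_nodes r par v"
    "lev r par y \<le> lev r par z"
  shows "y \<in> path_nodes r par z"
proof -
  obtain i where i: "y = (par ^^ i) v" "i \<le> lev r par v" using assms(3) unfolding pn_lev by auto
  obtain k where k: "z = (par ^^ k) v" "k \<le> lev r par v" using assms(4) unfolding pn_lev by auto
  have lz: "lev r par z = lev r par v - k" using lev_iter[OF assms(1,2) k(2)] k by simp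
  have "lev r par v - i \<le> lev r par v - k"
    using assms(5) lev_iter[OF assms(1,2) i(2)] lz i by simp
  then have ik: "k \<le> i" using i k by simp
  have "y = (par ^^ (i - k)) z" using i k ik by (simp add: fp_comp)
  moreover have "i - k \<le> lev r par z" using lz i ik by simp
  ultimately show ?thesis unfolding pn_lev by blast
qed

lemma child_facts:
  assumes "is_tree V r par" "c \<in> children V r par a"
  shows "a \<in> path_nodes r par c" "lev r par c = Suc (lev r par a)" "c \<in> V"
proof -
  have c: "c \<in> V" "c \<noteq> r" "par c = a" using assms(2) unfolding children_def by auto
  have "lev r par c \<noteq> 0" using lev_hit(1)[OF assms(1) c(1)] c(2) by (metis funpow_0)
  then have l1: "1 \<le> lev r par c" by simp
  show "a \<in> path_nodes r par c" unfolding pn_lev using l1 c(3)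
    by (intro CollectI exI[of _ 1]) simp
  show "lev r par c = Suc (lev r par a)" using lev_iter[OF assms(1) c(1) l1] c(3) l1 by simp
  show "c \<in> V" by fact
qed

lemma parts_a:
  assumes "is_tree V r par" "a \<in> V" "I \<subseteq> index_set V r par a" "u \<in> parts V r par a I"
  shows "u \<in> V \<and> a \<in> path_nodes r par u \<and> (u = a \<longrightarrow> None \<in> I)
     \<and> (u \<noteq> a \<longrightarrow> (\<exists>c. Some c \<in> I \<and> c \<in> children V r par a \<and> c \<in> path_nodes r par u))"
proof -
  obtain i where i: "i \<in> I" "u \<in> part V r par a i" using assms(4) unfolding parts_def by auto
  show ?thesis
  proof (cases i)
    case None then show ?thesis using i assms pn_self[of a r par] unfolding part_def by auto
  next
    case (Some c)
    have cc: "c \<in> children V r par a" using i(1) assms(3) Some unfolding index_set_def by auto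
    have u: "u \<in> V" "c \<in> path_nodes r par u" using i(2) Some unfolding part_def subtree_def by auto
    have "a \<in> path_nodes r par u" using pn_sub[OF assms(1) u] child_facts(1)[OF assms(1) cc] by auto
    moreover have "u \<noteq> a"
    proof
      assume "u = a"
      then have "lev r par c \<le> lev r par a" using pn_lev_le[OF assms(1) u] by simp
      then show False using child_facts(2)[OF assms(1) cc] by simp
    qed
    ultimately show ?thesis using u cc i Some by auto
  qed
qed

lemma parts_meet:
  assumes tree: "is_tree V r par" and "a \<in> V" "I1 \<subseteq> index_set V r par a"
    "I2 \<subseteq> index_set V r par a" "I1 \<inter> I2 = {}"
    "u \<in> parts V r par a I1" "u' \<in> parts V r par a I2"
  shows "path_nodes r par u \<inter> path_nodes r par u' \<subseteq> path_nodes r par a"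
proof
  fix z assume z: "z \<in> path_nodes r par u \<inter> path_nodes r par u'"
  note U = parts_a[OF tree assms(2,3,6)] and U' = parts_a[OF tree assms(2,4,7)]
  show "z \<in> path_nodes r par a"
  proof (cases "u = a \<or> u' = a")
    case True then show ?thesis using z by auto
  next
    case False
    then obtain c c' where c: "Some c \<in> I1" "c \<in> children V r par a" "c \<in> path_nodes r par u"
      and c': "Some c' \<in> I2" "c' \<in> children V r par a" "c' \<in> path_nodes r par u'"
      using U U' by blast
    have "c \<noteq> c'" using c c' assms(5) by auto
    show ?thesis
    proof (cases "lev r par z \<le> lev r par a")
      case True then show ?thesis using pn_low[OF tree _ _ _ True] U z by blast
    next
      case False
      then have l: "lev r par c \<le> lev r par z" "lev r par c' \<le> lev r par z"
        using child_facts(2)[OF tree c(2)] child_facts(2)[OF tree c'(2)] by auto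
      have "c \<in> path_nodes r par z" using pn_low[OF tree _ c(3) _ l(1)] U z by blast
      moreover have "c' \<in> path_nodes r par z" using pn_low[OF tree _ c'(3) _ l(2)] U' z by blast
      moreover have "z \<in> V" using pn_in[OF tree _ ] U z by blast
      ultimately have "c = c'" using pn_unique[OF tree] child_facts(2)[OF tree c(2)]
          child_facts(2)[OF tree c'(2)] by metis
      then show ?thesis using \<open>c \<noteq> c'\<close> by simp
    qed
  qed
qed

lemma finite_pe:
  "finite (path_edges r par v)"
proof -
  have "path_nodes r par v = (\<lambda>k. (par ^^ k) v) ` {..lev r par v}" unfolding pn_lev by auto
  then show ?thesis unfolding path_edges_def by simp
qed

lemma Wt_split:
  assumes tree: "is_tree V r par" and a: "a \<in> V" and I: "I1 \<subseteq> index_set V r par a"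
    "I2 \<subseteq> index_set V r par a" "I1 \<inter> I2 = {}"
    and A: "A \<subseteq> parts V r par a I1" and B: "B \<subseteq> parts V r par a I2"
  shows "Wt r par w (A \<union> B) = Wt r par w A + Wt r par w B
          - (if A \<noteq> {} \<and> B \<noteq> {} then depth r par w a else 0)"
proof -
  have fV: "finite V" using tree unfolding is_tree_def by simp
  have AV: "A \<subseteq> V" using A parts_a[OF tree a I(1)] by blast
  have BV: "B \<subseteq> V" using B parts_a[OF tree a I(2)] by blast
  have fA: "finite A" "finite B" using AV BV fV finite_subset by auto
  define EA where "EA = (\<Union>v\<in>A. path_edges r par v)"
  define EB where "EB = (\<Union>v\<in>B. path_edges r par v)"
  have fE: "finite EA" "finite EB" unfolding EA_def EB_def using fA finite_pe by auto
  have WU: "Wt r par w (A \<union> B) = sum w EA + sum w EB - sum w (EA \<inter> EB)"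
    unfolding Wt_def EA_def EB_def UN_Un by (rule sum_Un) (use fE in \<open>auto simp: EA_def EB_def\<close>)
  have int: "EA \<inter> EB = (if A \<noteq> {} \<and> B \<noteq> {} then path_edges r par a else {})"
  proof (cases "A \<noteq> {} \<and> B \<noteq> {}")
    case True
    have "EA \<inter> EB \<subseteq> path_edges r par a"
    proof
      fix e assume "e \<in> EA \<inter> EB"
      then obtain v v' where v: "v \<in> A" "v' \<in> B" "e \<in> path_edges r par v" "e \<in> path_edges r par v'"
        unfolding EA_def EB_def by auto
      have "e \<in> path_nodes r par a"
        using parts_meet[OF tree a I, of v v'] v A B unfolding path_edges_def by blast
      then show "e \<in> path_edges r par a" using v unfolding path_edges_def by auto
    qed
    moreover have "path_edges r par a \<subseteq> EA \<inter> EB"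
    proof -
      obtain v v' where v: "v \<in> A" "v' \<in> B" using True by auto
      have "path_nodes r par a \<subseteq> path_nodes r par v"
        using pn_sub[OF tree] parts_a[OF tree a I(1)] v A by blast
      moreover have "path_nodes r par a \<subseteq> path_nodes r par v'"
        using pn_sub[OF tree] parts_a[OF tree a I(2)] v B by blast
      ultimately show ?thesis using v unfolding EA_def EB_def path_edges_def by blast
    qed
    ultimately show ?thesis using True by auto
  next
    case False then show ?thesis unfolding EA_def EB_def by auto
  qed
  show ?thesis using WU int unfolding Wt_def depth_def EA_def EB_def by auto
qed

lemma sum_omega_avoid:
  fixes \<pi> :: "'a \<Rightarrow> real"
  assumes fV: "finite V" and S: "S \<subseteq> V"
  shows "(\<Sum>U\<in>Pow V. omega_prob V \<pi> U * (if S \<inter> U = {} then 1 else 0)) = (\<Prod>s\<in>S. 1 - \<pi> s)"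
proof -
  define f1 where "f1 = (\<lambda>u. if u \<in> S then 0 else \<pi> u)"
  have "(\<Prod>x\<in>V. f1 x + (1 - \<pi> x)) = (\<Sum>X\<in>Pow V. (\<Prod>x\<in>X. f1 x) * (\<Prod>x\<in>V-X. 1 - \<pi> x))"
    by (rule prod_add[OF fV])
  moreover have "(\<Prod>x\<in>V. f1 x + (1 - \<pi> x)) = (\<Prod>s\<in>S. 1 - \<pi> s)"
  proof -
    have "(\<Prod>x\<in>V. f1 x + (1 - \<pi> x)) = (\<Prod>x\<in>V. if x \<in> S then 1 - \<pi> x else 1)"
      unfolding f1_def by (rule prod.cong) auto
    also have "\<dots> = (\<Prod>s\<in>S. 1 - \<pi> s)"
      using prod.inter_restrict[OF fV, of "\<lambda>x. 1 - \<pi> x" S] S by (simp add: Int_absorb1)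
    finally show ?thesis .
  qed
  moreover have X: "(\<Prod>x\<in>X. f1 x) = (\<Prod>x\<in>X. \<pi> x) * (if S \<inter> X = {} then 1 else 0)"
    if "X \<in> Pow V" for X
  proof -
    have fX: "finite X" using that fV finite_subset by auto
    show ?thesis
    proof (cases "S \<inter> X = {}")
      case True
      have "(\<Prod>x\<in>X. f1 x) = (\<Prod>x\<in>X. \<pi> x)"
        by (rule prod.cong) (use True in \<open>auto simp: f1_def\<close>)
      then show ?thesis using True by simp
    next
      case False
      then obtain u where "u \<in> S" "u \<in> X" by auto
      then have "(\<Prod>x\<in>X. f1 x) = 0" using fX unfolding f1_def
        by (intro prod_zero) auto
      then show ?thesis using False by simp
    qed
  qed
  ultimately have "(\<Prod>s\<in>S. 1 - \<pi> s) = (\<Sum>X\<in>Pow V. (\<Prod>x\<in>X. f1 x) * (\<Prod>x\<in>V-X. 1 - \<pi> x))"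
    by simp
  also have "\<dots> = (\<Sum>U\<in>Pow V. omega_prob V \<pi> U * (if S \<inter> U = {} then 1 else 0))"
    unfolding omega_prob_def by (rule sum.cong) (simp_all add: X)
  finally show ?thesis by simp
qed

theorem proposition6:
  fixes V :: "'a set" and r :: 'a and par :: "'a \<Rightarrow> 'a"
    and w \<pi> p :: "'a \<Rightarrow> real" and a :: 'a and I1 I2 :: "'a option set"
    and \<Psi> \<Phi> :: "'a set" and x :: real
  assumes tree: "is_tree V r par"
    and w_nonneg: "\<forall>v\<in>V - {r}. w v \<ge> 0"
    and pi_range: "\<forall>v\<in>V. 0 < \<pi> v \<and> \<pi> v \<le> 1"
    and a_in: "a \<in> V"
    and I1_sub: "I1 \<subseteq> index_set V r par a"
    and I2_sub: "I2 \<subseteq> index_set V r par a"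
    and disj: "I1 \<inter> I2 = {}"
    and Psi_sub: "\<Psi> \<subseteq> parts V r par a I1"
    and Phi_sub: "\<Phi> \<subseteq> parts V r par a I2"
    and x_range: "0 \<le> x" "x \<le> depth r par w a"
  shows "G V r par w \<pi> p (\<Psi> \<union> \<Phi>) x =
         G V r par w \<pi> p \<Psi> x
         + G V r par w \<pi> p \<Phi> (x + (depth r par w a - x) * Pr \<pi> \<Psi>)"
proof -
  note I = I1_sub I2_sub disj
  have fV: "finite V" using tree unfolding is_tree_def by simp
  have PsiV: "\<Psi> \<subseteq> V" using Psi_sub parts_a[OF tree a_in I1_sub] by blast
  have PhiV: "\<Phi> \<subseteq> V" using Phi_sub parts_a[OF tree a_in I2_sub] by blast
  have fin: "finite \<Psi>" "finite \<Phi>" using PsiV PhiV fV finite_subset by auto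
  have dj: "\<Psi> \<inter> \<Phi> = {}"
  proof (rule ccontr)
    assume "\<Psi> \<inter> \<Phi> \<noteq> {}"
    then obtain u where u: "u \<in> \<Psi>" "u \<in> \<Phi>" by auto
    note U1 = parts_a[OF tree a_in I1_sub, of u] and U2 = parts_a[OF tree a_in I2_sub, of u]
    have uV: "u \<in> V" using U1 u Psi_sub by blast
    have "path_nodes r par u \<subseteq> path_nodes r par a"
      using parts_meet[OF tree a_in I, of u u] u Psi_sub Phi_sub by blast
    then have lu: "lev r par u \<le> lev r par a" using pn_lev_le[OF tree a_in] pn_self[of u r par] by blast
    show False
    proof (cases "u = a")
      case True then show False using U1 U2 u Psi_sub Phi_sub disj by blast
    next
      case False
      then obtain c where c: "c \<in> children V r par a" "c \<in> path_nodes r par u"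
        using U1 u Psi_sub by blast
      have "lev r par c \<le> lev r par u" using pn_lev_le[OF tree uV c(2)] .
      then show False using lu child_facts(2)[OF tree c(1)] by simp
    qed
  qed
  define d where "d = depth r par w a"
  define q where "q = (\<lambda>S::'a set. \<Prod>s\<in>S. 1 - \<pi> s)"
  define ind where "ind = (\<lambda>(S::'a set) (U::'a set). if S \<inter> U = {} then 1 else (0::real))"
  have avoid: "(\<Sum>U\<in>Pow V. omega_prob V \<pi> U * ind S U) = q S" if "S \<subseteq> V" for S
    unfolding ind_def q_def using sum_omega_avoid[OF fV that] .
  have qU: "q (\<Psi> \<union> \<Phi>) = q \<Psi> * q \<Phi>" unfolding q_def using prod.union_disjoint[OF fin dj] .
  have both: "(\<Sum>U\<in>Pow V. omega_prob V \<pi> U * (if \<Psi> \<inter> U \<noteq> {} \<and> \<Phi> \<inter> U \<noteq> {} then 1 else 0))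
      = Pr \<pi> \<Psi> * Pr \<pi> \<Phi>"
  proof -
    have "(\<Sum>U\<in>Pow V. omega_prob V \<pi> U * (if \<Psi> \<inter> U \<noteq> {} \<and> \<Phi> \<inter> U \<noteq> {} then 1 else 0))
       = (\<Sum>U\<in>Pow V. omega_prob V \<pi> U * ind {} U - omega_prob V \<pi> U * ind \<Psi> U
            - omega_prob V \<pi> U * ind \<Phi> U + omega_prob V \<pi> U * ind (\<Psi> \<union> \<Phi>) U)"
      by (rule sum.cong) (auto simp: ind_def Int_Un_distrib2)
    also have "\<dots> = q {} - q \<Psi> - q \<Phi> + q (\<Psi> \<union> \<Phi>)"
      using avoid[of "{}"] avoid[OF PsiV] avoid[OF PhiV] avoid[of "\<Psi> \<union> \<Phi>"] PsiV PhiV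
      by (simp add: sum.distrib sum_subtractf)
    finally show ?thesis using qU unfolding Pr_def q_def by (simp add: algebra_simps)
  qed
  have EWU: "EW V r par w \<pi> (\<Psi> \<union> \<Phi>) = EW V r par w \<pi> \<Psi> + EW V r par w \<pi> \<Phi> - d * (Pr \<pi> \<Psi> * Pr \<pi> \<Phi>)"
  proof -
    have "EW V r par w \<pi> (\<Psi> \<union> \<Phi>) = (\<Sum>U\<in>Pow V. omega_prob V \<pi> U * Wt r par w (\<Psi> \<inter> U)
       + omega_prob V \<pi> U * Wt r par w (\<Phi> \<inter> U)
       - d * (omega_prob V \<pi> U * (if \<Psi> \<inter> U \<noteq> {} \<and> \<Phi> \<inter> U \<noteq> {} then 1 else 0)))"
      unfolding EW_def
    proof (rule sum.cong)
      fix U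
      have "Wt r par w ((\<Psi> \<union> \<Phi>) \<inter> U) = Wt r par w ((\<Psi> \<inter> U) \<union> (\<Phi> \<inter> U))"
        by (simp add: Int_Un_distrib2)
      also have "\<dots> = Wt r par w (\<Psi> \<inter> U) + Wt r par w (\<Phi> \<inter> U)
          - (if \<Psi> \<inter> U \<noteq> {} \<and> \<Phi> \<inter> U \<noteq> {} then d else 0)"
        unfolding d_def by (rule Wt_split[OF tree a_in I]) (use Psi_sub Phi_sub in auto)
      also have "\<dots> = Wt r par w (\<Psi> \<inter> U) + Wt r par w (\<Phi> \<inter> U)
          - d * (if \<Psi> \<inter> U \<noteq> {} \<and> \<Phi> \<inter> U \<noteq> {} then 1 else 0)" by simp
      finally have eq: "Wt r par w ((\<Psi> \<union> \<Phi>) \<inter> U) = Wt r par w (\<Psi> \<inter> U) + Wt r par w (\<Phi> \<inter> U)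
          - d * (if \<Psi> \<inter> U \<noteq> {} \<and> \<Phi> \<inter> U \<noteq> {} then 1 else 0)" .
      show "omega_prob V \<pi> U * Wt r par w ((\<Psi> \<union> \<Phi>) \<inter> U) =
         omega_prob V \<pi> U * Wt r par w (\<Psi> \<inter> U) + omega_prob V \<pi> U * Wt r par w (\<Phi> \<inter> U) -
         d * (omega_prob V \<pi> U * (if \<Psi> \<inter> U \<noteq> {} \<and> \<Phi> \<inter> U \<noteq> {} then 1 else 0))"
        unfolding eq by (simp only: algebra_simps)
    qed simp
    also have "\<dots> = EW V r par w \<pi> \<Psi> + EW V r par w \<pi> \<Phi> - d * (Pr \<pi> \<Psi> * Pr \<pi> \<Phi>)"
      unfolding EW_def both[symmetric]
      by (simp add: sum.distrib sum_subtractf sum_distrib_left)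
    finally show ?thesis .
  qed
  have sp: "(\<Sum>s\<in>\<Psi> \<union> \<Phi>. p s * \<pi> s) = (\<Sum>s\<in>\<Psi>. p s * \<pi> s) + (\<Sum>s\<in>\<Phi>. p s * \<pi> s)"
    using sum.union_disjoint[OF fin dj] .
  have PU: "Pr \<pi> (\<Psi> \<union> \<Phi>) = 1 - q \<Psi> * q \<Phi>" using qU unfolding Pr_def q_def by simp
  show ?thesis unfolding G_def sp EWU PU d_def[symmetric]
    unfolding Pr_def q_def[symmetric] by (simp add: algebra_simps)
qed

end
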